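(* Let $M$ be a maximal set of colored hypergraphs that are degree-irreducible and degree-reducibly independent. Then $M$ is also a maximal set of hypergraphs that are irreducible and reducibly independent.
   Context: Fix $n\ge2$, $V=\mathbb{C}^n$ with standard basis $e_1,\dots,e_n$ and ${\rm SL}_n$ acting by left multiplication, integers $n_1,\dots,n_{n-1}\ge0$, and $W=\bigoplus_{i=1}^{n-1}(\bigwedge^iV)^{n_i}$; write the component of $t\in W$ in the $j$-th copy of $\bigwedge^iV$ as $t_{i,j}=\sum_{a_1<\dots<a_i}t_{i,j}^{a_1\cdots a_i}e_{a_1}\wedge\dots\wedge e_{a_i}$, extended to all index tuples by total antisymmetry. A colored hypergraph $\Gamma$ consists of an ordered finite vertex set and a finite family of hyperedges; each hyperedge has a size $i\in\{1,\dots,n-1\}$, a color $j\in\{1,\dots,n_i\}$ and is a multiset of $i$ vertices (its connections; it is looping if all connections are at one vertex); every vertex has exactly $n$ connections in total. The invariant $f_\Gamma\in\mathbb{C}[W]^{{\rm SL}_n}$ is the complete contraction obtained by taking one Levi-Civita symbol $\varepsilon_{a_1\cdots a_n}$ per vertex and one copy of the components of $t_{i,j}$ per hyperedge of size $i$ and color $j$, and contracting each of the $i$ indices of a hyperedge with an index slot of the vertex at which the corresponding connection sits (each slot used once); $f_\Gamma$ is determined by $\Gamma$ up to sign (a fixed sign convention is chosen), and $f$ is extended linearly to linear combinations of hypergraphs (graphsums). $\Gamma$ is disconnected if its vertices split into two nonempty classes with no hyperedge connecting both. A graphsum $\Upsilon$ is reducible if $f_\Upsilon=0$ or $f_\Upsilon=\sum_i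 a_if_{\Gamma_i}$ with all $\Gamma_i$ disconnected, and irreducible otherwise; graphsums are reducibly independent if only the trivial linear combination of them is reducible, and $\Upsilon_1\simeq_r\Upsilon_2$ means $\Upsilon_1-\Upsilon_2$ is reducible. The virtual degree of a vertex $v$ is $n$ minus the total number of connections at $v$ of looping hyperedges at $v$. The virtual degree type $d(\Gamma)$ of a hypergraph with $k$ vertices is the non-increasing sequence $(d_1,\dots,d_k)$ of virtual degrees of its vertices; for hypergraphs with the same number $k$ of vertices set $\Gamma<\Gamma'$ iff $d_1\le d_1',\dots,d_{k-1}\le d'_{k-1}$ and $d_k<d'_k$. A graphsum $\sum\Gamma_i$ is degree-reducible if it is $\simeq_r$ to $0$ or to a graphsum $\sum\Gamma'_j$ with $d(\Gamma'_j)<d(\Gamma_i)$ for all $i,j$; degree-irreducible otherwise. Graphsums $\Upsilon_1,\dots,\Upsilon_N$ are degree-reducibly independent if $\sum a_i\Upsilon_i$ is degree-reducible only when all $a_i=0$. *)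

theory Defs
  imports Complex_Main "HOL-Library.FuncSet"
begin

text \<open>A hyperedge is a pair (color j, list of connections);
its size i is the length of the connection list. A hypergraph is a pair
(k, E): vertices are 0,...,k-1 (in this order) and E is the (ordered) list
of hyperedges. The orderings fix the sign convention of the invariant.\<close>

type_synonym hedge = "nat \<times> nat list"
type_synonym hgraph = "nat \<times> hedge list"

definition nverts :: "hgraph \<Rightarrow> nat" where "nverts G = fst G"
definition hedges :: "hgraph \<Rightarrow> hedge list" where "hedges G = snd G"

definition valid_hg :: "nat \<Rightarrow> (nat \<Rightarrow> nat) \<Rightarrow> hgraph \<Rightarrow> bool" where
  "valid_hg n nc G \<longleftrightarrow>
     (\<forall>(j, c) \<in> set (hedges G).
        1 \<le> length c \<and> length c \<le> n - 1 \<and> 1 \<le> j \<and> j \<le> nc (length c)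
        \<and> (\<forall>v \<in> set c. v < nverts G))
     \<and> (\<forall>v < nverts G. (\<Sum>e\<leftarrow>hedges G. count_list (snd e) v) = n)"

definition inversions :: "nat list \<Rightarrow> nat" where
  "inversions a = card {(p, q). p < q \<and> q < length a \<and> a ! q < a ! p}"

definition levi :: "nat \<Rightarrow> nat list \<Rightarrow> complex" where
  "levi n a = (if length a = n \<and> distinct a \<and> set a \<subseteq> {..<n}
               then (-1) ^ inversions a else 0)"

text \<open>Points of W: t i j S is the coordinate of e_{S_1} wedge ... wedge e_{S_i}
in the j-th copy of the i-th exterior power, for S strictly increasing (values of t
at other arguments are irrelevant). Components for arbitrary index tuples are
obtained by total antisymmetry.\<close>
definition comp :: "(nat \<Rightarrow> nat \<Rightarrow> nat list \<Rightarrow> complex) \<Rightarrow> nat \<Rightarrow> nat list \<Rightarrow> complex" where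
  "comp t j a = (if distinct a then (-1) ^ inversions a * t (length a) j (sort a) else 0)"

definition conns :: "hgraph \<Rightarrow> (nat \<times> nat) set" where
  "conns G = {(e, p). e < length (hedges G) \<and> p < length (snd (hedges G ! e))}"

definition vidx :: "hgraph \<Rightarrow> (nat \<times> nat \<Rightarrow> nat) \<Rightarrow> nat \<Rightarrow> nat list" where
  "vidx G \<sigma> v = concat (map (\<lambda>e. map (\<lambda>p. \<sigma> (e, p))
        (filter (\<lambda>p. snd (hedges G ! e) ! p = v) [0..<length (snd (hedges G ! e))]))
      [0..<length (hedges G)])"

definition finv :: "nat \<Rightarrow> hgraph \<Rightarrow> (nat \<Rightarrow> nat \<Rightarrow> nat list \<Rightarrow> complex) \<Rightarrow> complex" where
  "finv n G t = (\<Sum>\<sigma> \<in> PiE (conns G) (\<lambda>_. {..<n}).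
      (\<Prod>v < nverts G. levi n (vidx G \<sigma> v)) *
      (\<Prod>e < length (hedges G). comp t (fst (hedges G ! e))
           (map (\<lambda>p. \<sigma> (e, p)) [0..<length (snd (hedges G ! e))])))"

text \<open>Graphsums: finitely supported complex linear combinations of hypergraphs.\<close>
type_synonym gsum = "hgraph \<Rightarrow> complex"

definition supp :: "gsum \<Rightarrow> hgraph set" where "supp c = {G. c G \<noteq> 0}"

definition is_gsum :: "nat \<Rightarrow> (nat \<Rightarrow> nat) \<Rightarrow> gsum \<Rightarrow> bool" where
  "is_gsum n nc c \<longleftrightarrow> finite (supp c) \<and> (\<forall>G \<in> supp c. valid_hg n nc G)"

definition fsum :: "nat \<Rightarrow> gsum \<Rightarrow> (nat \<Rightarrow> nat \<Rightarrow> nat list \<Rightarrow> complex) \<Rightarrow> complex" where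
  "fsum n c t = (\<Sum>G \<in> supp c. c G * finv n G t)"

definition single :: "hgraph \<Rightarrow> gsum" where
  "single G = (\<lambda>H. if H = G then 1 else 0)"

definition disconnected :: "hgraph \<Rightarrow> bool" where
  "disconnected G \<longleftrightarrow> (\<exists>A. A \<subseteq> {..<nverts G} \<and> A \<noteq> {} \<and> A \<noteq> {..<nverts G} \<and>
      (\<forall>e \<in> set (hedges G). set (snd e) \<subseteq> A \<or> set (snd e) \<inter> A = {}))"

definition reducible :: "nat \<Rightarrow> (nat \<Rightarrow> nat) \<Rightarrow> gsum \<Rightarrow> bool" where
  "reducible n nc c \<longleftrightarrow> is_gsum n nc c \<and>
     (fsum n c = (\<lambda>t. 0) \<or>
      (\<exists>c'. is_gsum n nc c' \<and> (\<forall>G \<in> supp c'. disconnected G) \<and> fsum n c = fsum n c'))"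

definition irreducible :: "nat \<Rightarrow> (nat \<Rightarrow> nat) \<Rightarrow> gsum \<Rightarrow> bool" where
  "irreducible n nc c \<longleftrightarrow> is_gsum n nc c \<and> \<not> reducible n nc c"

definition red_equiv :: "nat \<Rightarrow> (nat \<Rightarrow> nat) \<Rightarrow> gsum \<Rightarrow> gsum \<Rightarrow> bool" where
  "red_equiv n nc c1 c2 \<longleftrightarrow> reducible n nc (\<lambda>G. c1 G - c2 G)"

definition red_indep :: "nat \<Rightarrow> (nat \<Rightarrow> nat) \<Rightarrow> hgraph set \<Rightarrow> bool" where
  "red_indep n nc S \<longleftrightarrow> (\<forall>a. finite (supp a) \<and> supp a \<subseteq> S \<and> reducible n nc a \<longrightarrow> a = (\<lambda>G. 0))"

definition vdeg :: "nat \<Rightarrow> hgraph \<Rightarrow> nat \<Rightarrow> nat" where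
  "vdeg n G v = n - (\<Sum>e\<leftarrow>hedges G. if set (snd e) = {v} then length (snd e) else 0)"

definition dtype :: "nat \<Rightarrow> hgraph \<Rightarrow> nat list" where
  "dtype n G = rev (sort (map (vdeg n G) [0..<nverts G]))"

definition dless :: "nat \<Rightarrow> hgraph \<Rightarrow> hgraph \<Rightarrow> bool" where
  "dless n G G' \<longleftrightarrow> (let d = dtype n G; d' = dtype n G' in
     length d = length d' \<and> length d \<ge> 1 \<and>
     (\<forall>i < length d - 1. d ! i \<le> d' ! i) \<and> last d < last d')"

definition deg_reducible :: "nat \<Rightarrow> (nat \<Rightarrow> nat) \<Rightarrow> gsum \<Rightarrow> bool" where
  "deg_reducible n nc c \<longleftrightarrow> is_gsum n nc c \<and>
     (red_equiv n nc c (\<lambda>G. 0) \<or>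
      (\<exists>c'. is_gsum n nc c' \<and> red_equiv n nc c c' \<and>
         (\<forall>G \<in> supp c. \<forall>G' \<in> supp c'. dless n G' G)))"

definition deg_irreducible :: "nat \<Rightarrow> (nat \<Rightarrow> nat) \<Rightarrow> gsum \<Rightarrow> bool" where
  "deg_irreducible n nc c \<longleftrightarrow> is_gsum n nc c \<and> \<not> deg_reducible n nc c"

definition deg_red_indep :: "nat \<Rightarrow> (nat \<Rightarrow> nat) \<Rightarrow> hgraph set \<Rightarrow> bool" where
  "deg_red_indep n nc S \<longleftrightarrow> (\<forall>a. finite (supp a) \<and> supp a \<subseteq> S \<and> deg_reducible n nc a \<longrightarrow> a = (\<lambda>G. 0))"

definition maximal_set :: "('a set \<Rightarrow> bool) \<Rightarrow> 'a set \<Rightarrow> bool" where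
  "maximal_set P M \<longleftrightarrow> P M \<and> (\<forall>S. P S \<and> M \<subseteq> S \<longrightarrow> S = M)"

definition DIRI :: "nat \<Rightarrow> (nat \<Rightarrow> nat) \<Rightarrow> hgraph set \<Rightarrow> bool" where
  "DIRI n nc S \<longleftrightarrow> (\<forall>G \<in> S. valid_hg n nc G \<and> deg_irreducible n nc (single G)) \<and> deg_red_indep n nc S"

definition IRI :: "nat \<Rightarrow> (nat \<Rightarrow> nat) \<Rightarrow> hgraph set \<Rightarrow> bool" where
  "IRI n nc S \<longleftrightarrow> (\<forall>G \<in> S. valid_hg n nc G \<and> irreducible n nc (single G)) \<and> red_indep n nc S"

end

theory Submission
  imports Defs
begin

lemma supp_single: "supp (single G) = {G}"
  by (auto simp: supp_def single_def)

lemma fsum_eq: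
  assumes "finite A" "supp c \<subseteq> A"
  shows "fsum n c t = (\<Sum>G\<in>A. c G * finv n G t)"
proof -
  have "(\<Sum>G\<in>A. c G * finv n G t) = (\<Sum>G\<in>supp c. c G * finv n G t)"
    by (rule sum.mono_neutral_right) (use assms in \<open>auto simp: supp_def\<close>)
  then show ?thesis by (simp add: fsum_def)
qed

lemma gsum_add: "is_gsum n nc x \<Longrightarrow> is_gsum n nc y \<Longrightarrow> is_gsum n nc (\<lambda>G. x G + y G)"
proof -
  assume a: "is_gsum n nc x" "is_gsum n nc y"
  have s: "supp (\<lambda>G. x G + y G) \<subseteq> supp x \<union> supp y" by (auto simp: supp_def)
  show ?thesis using a s unfolding is_gsum_def by (meson Un_iff finite_UnI finite_subset subsetD)
qed

lemma gsum_scale: "is_gsum n nc x \<Longrightarrow> is_gsum n nc (\<lambda>G. k * x G)"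
proof -
  assume a: "is_gsum n nc x"
  have s: "supp (\<lambda>G. k * x G) \<subseteq> supp x" by (auto simp: supp_def)
  show ?thesis using a s unfolding is_gsum_def by (meson finite_subset subsetD)
qed

lemma fsum_add:
  assumes "finite (supp x)" "finite (supp y)"
  shows "fsum n (\<lambda>G. x G + y G) t = fsum n x t + fsum n y t"
proof -
  let ?A = "supp x \<union> supp y"
  have s: "supp (\<lambda>G. x G + y G) \<subseteq> ?A" by (auto simp: supp_def)
  have "fsum n (\<lambda>G. x G + y G) t = (\<Sum>G\<in>?A. (x G + y G) * finv n G t)"
    using fsum_eq[OF _ s] assms by simp
  also have "\<dots> = (\<Sum>G\<in>?A. x G * finv n G t) + (\<Sum>G\<in>?A. y G * finv n G t)"
    by (simp add: distrib_right sum.distrib)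
  also have "\<dots> = fsum n x t + fsum n y t"
    using fsum_eq[of ?A x n t] fsum_eq[of ?A y n t] assms by auto
  finally show ?thesis .
qed

lemma fsum_scale:
  assumes "finite (supp x)"
  shows "fsum n (\<lambda>G. k * x G) t = k * fsum n x t"
proof -
  have s: "supp (\<lambda>G. k * x G) \<subseteq> supp x" by (auto simp: supp_def)
  have "fsum n (\<lambda>G. k * x G) t = (\<Sum>G\<in>supp x. k * x G * finv n G t)"
    using fsum_eq[OF assms s] by simp
  also have "\<dots> = k * fsum n x t" by (simp add: fsum_def sum_distrib_left mult.assoc)
  finally show ?thesis .
qed

lemma zero_gsum: "is_gsum n nc (\<lambda>G. 0)"
  by (simp add: is_gsum_def supp_def)

lemma fsum_zero: "fsum n (\<lambda>G. 0) t = 0"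
  by (simp add: fsum_def supp_def)

lemma red_iff: "reducible n nc c \<longleftrightarrow> is_gsum n nc c \<and>
   (\<exists>c'. is_gsum n nc c' \<and> (\<forall>G\<in>supp c'. disconnected G) \<and> fsum n c = fsum n c')"
proof
  assume r: "reducible n nc c"
  show "is_gsum n nc c \<and>
   (\<exists>c'. is_gsum n nc c' \<and> (\<forall>G\<in>supp c'. disconnected G) \<and> fsum n c = fsum n c')"
  proof (cases "fsum n c = (\<lambda>t. 0)")
    case True
    have "supp (\<lambda>G::hgraph. 0::complex) = {}" by (simp add: supp_def)
    then show ?thesis using r True zero_gsum[of n nc] fsum_zero[of n]
      unfolding reducible_def by (intro conjI exI[of _ "\<lambda>G. 0"]) auto
  next
    case False then show ?thesis using r unfolding reducible_def by auto
  qed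
next
  assume "is_gsum n nc c \<and>
   (\<exists>c'. is_gsum n nc c' \<and> (\<forall>G\<in>supp c'. disconnected G) \<and> fsum n c = fsum n c')"
  then show "reducible n nc c" unfolding reducible_def by auto
qed

lemma red_zero: "reducible n nc (\<lambda>G. 0)"
  unfolding reducible_def using zero_gsum fsum_zero by (auto simp: fun_eq_iff)

lemma red_add:
  assumes "reducible n nc x" "reducible n nc y"
  shows "reducible n nc (\<lambda>G. x G + y G)"
proof -
  obtain cx where cx: "is_gsum n nc cx" "\<forall>G\<in>supp cx. disconnected G" "fsum n x = fsum n cx"
    and gx: "is_gsum n nc x" using assms(1) red_iff by blast
  obtain cy where cy: "is_gsum n nc cy" "\<forall>G\<in>supp cy. disconnected G" "fsum n y = fsum n cy"
    and gy: "is_gsum n nc y" using assms(2) red_iff by blast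
  have s: "supp (\<lambda>G. cx G + cy G) \<subseteq> supp cx \<union> supp cy" by (auto simp: supp_def)
  have "fsum n (\<lambda>G. x G + y G) = fsum n (\<lambda>G. cx G + cy G)"
    using fsum_add gx gy cx cy unfolding is_gsum_def by (auto simp: fun_eq_iff)
  then show ?thesis unfolding red_iff using gsum_add[OF gx gy] gsum_add[OF cx(1) cy(1)] s cx(2) cy(2)
    by (intro conjI exI[of _ "\<lambda>G. cx G + cy G"]) auto
qed

lemma red_scale:
  assumes "reducible n nc x"
  shows "reducible n nc (\<lambda>G. k * x G)"
proof -
  obtain cx where cx: "is_gsum n nc cx" "\<forall>G\<in>supp cx. disconnected G" "fsum n x = fsum n cx"
    and gx: "is_gsum n nc x" using assms(1) red_iff by blast
  have s: "supp (\<lambda>G. k * cx G) \<subseteq> supp cx" by (auto simp: supp_def)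
  have "fsum n (\<lambda>G. k * x G) = fsum n (\<lambda>G. k * cx G)"
    using fsum_scale gx cx unfolding is_gsum_def by (auto simp: fun_eq_iff)
  then show ?thesis unfolding red_iff using gsum_scale[OF gx] gsum_scale[OF cx(1)] s cx(2)
    by (intro conjI exI[of _ "\<lambda>G. k * cx G"]) auto
qed

lemma red_sum:
  assumes "finite F" "\<forall>i\<in>F. reducible n nc (f i)"
  shows "reducible n nc (\<lambda>G. \<Sum>i\<in>F. f i G)"
  using assms
proof (induction F rule: finite_induct)
  case empty then show ?case using red_zero by simp
next
  case (insert x F)
  have "reducible n nc (\<lambda>G. f x G + (\<Sum>i\<in>F. f i G))"
    using red_add[of n nc "f x" "\<lambda>G. \<Sum>i\<in>F. f i G"] insert by auto
  then show ?case using insert by simp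
qed

lemma dless_last: "dless n G' G \<Longrightarrow> last (dtype n G') < last (dtype n G)"
  by (simp add: dless_def Let_def)

lemma span:
  assumes D: "maximal_set (DIRI n nc) M"
  shows "valid_hg n nc G \<Longrightarrow> \<exists>a. finite (supp a) \<and> supp a \<subseteq> M \<and> reducible n nc (\<lambda>H. single G H - a H)"
proof (induction G rule: measure_induct_rule[where f="\<lambda>G. last (dtype n G)"])
  case (less G)
  have DM: "DIRI n nc M" and mx: "\<And>S. DIRI n nc S \<Longrightarrow> M \<subseteq> S \<Longrightarrow> S = M"
    using D unfolding maximal_set_def by auto
  show ?case
  proof (cases "G \<in> M")
    case True
    have "(\<lambda>H. single G H - single G H) = (\<lambda>H. 0)" by simp
    then have "reducible n nc (\<lambda>H. single G H - single G H)" using red_zero[of n nc] by simp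
    moreover have "finite (supp (single G))" "supp (single G) \<subseteq> M"
      unfolding supp_single using True by simp_all
    ultimately show ?thesis by blast
  next
    case notM: False
    have "\<not> DIRI n nc (insert G M)" using mx[of "insert G M"] notM by auto
    then have "\<exists>b. finite (supp b) \<and> supp b \<subseteq> insert G M \<and> deg_reducible n nc b \<and> b \<noteq> (\<lambda>G. 0)"
    proof -
      assume nd: "\<not> DIRI n nc (insert G M)"
      show ?thesis
      proof (cases "deg_red_indep n nc (insert G M)")
        case False then show ?thesis unfolding deg_red_indep_def by blast
      next
        case True
        then obtain H where H: "H \<in> insert G M" "\<not> (valid_hg n nc H \<and> deg_irreducible n nc (single H))"
          using nd unfolding DIRI_def by blast
        then have "H = G" using DM unfolding DIRI_def by auto
        then have dr: "deg_reducible n nc (single G)"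
          using H less.prems unfolding deg_irreducible_def is_gsum_def supp_single by auto
        have "single G G \<noteq> 0" by (simp add: single_def)
        then have "single G \<noteq> (\<lambda>G. 0)" by metis
        then show ?thesis using dr supp_single[of G] by (intro exI[of _ "single G"]) auto
      qed
    qed
    then obtain b where b: "finite (supp b)" "supp b \<subseteq> insert G M" "deg_reducible n nc b"
      "b \<noteq> (\<lambda>G. 0)" by blast
    have bG: "b G \<noteq> 0"
    proof
      assume "b G = 0"
      then have "supp b \<subseteq> M" using b(2) by (auto simp: supp_def)
      then show False using DM b unfolding DIRI_def deg_red_indep_def by blast
    qed
    have Gs: "G \<in> supp b" using bG by (simp add: supp_def)
    have "\<exists>c'. is_gsum n nc c' \<and> reducible n nc (\<lambda>H. b H - c' H) \<and> (\<forall>G'\<in>supp c'. dless n G' G)"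
    proof (cases "red_equiv n nc b (\<lambda>G. 0)")
      case True
      then show ?thesis using zero_gsum[of n nc] unfolding red_equiv_def
        by (intro exI[of _ "\<lambda>G. 0"]) (auto simp: supp_def)
    next
      case False
      then show ?thesis using b(3) Gs unfolding deg_reducible_def red_equiv_def by blast
    qed
    then obtain c' where c': "is_gsum n nc c'" "reducible n nc (\<lambda>H. b H - c' H)"
      "\<forall>G'\<in>supp c'. dless n G' G" by blast
    have "\<forall>G'\<in>supp c'. \<exists>a. finite (supp a) \<and> supp a \<subseteq> M \<and> reducible n nc (\<lambda>H. single G' H - a H)"
    proof
      fix G' assume g: "G' \<in> supp c'"
      have "valid_hg n nc G'" using c'(1) g unfolding is_gsum_def by auto
      moreover have "last (dtype n G') < last (dtype n G)" using c'(3) g dless_last by blast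
      ultimately show "\<exists>a. finite (supp a) \<and> supp a \<subseteq> M \<and> reducible n nc (\<lambda>H. single G' H - a H)"
        using less.IH by blast
    qed
    then obtain aa where aa: "\<forall>G'\<in>supp c'. finite (supp (aa G')) \<and> supp (aa G') \<subseteq> M \<and>
        reducible n nc (\<lambda>H. single G' H - aa G' H)" by metis
    have fc: "finite (supp c')" using c'(1) unfolding is_gsum_def by auto
    define a where "a = (\<lambda>H. (b G * single G H - b H + (\<Sum>G'\<in>supp c'. c' G' * aa G' H)) / b G)"
    define X where "X = (\<lambda>H. (1 / b G) * ((b H - c' H) + (\<Sum>G'\<in>supp c'. c' G' * (single G' H - aa G' H))))"
    have rX: "reducible n nc X"
      unfolding X_def
      apply (rule red_scale)
      apply (rule red_add[OF c'(2)])
      apply (rule red_sum[OF fc, where f="\<lambda>G' H. c' G' * (single G' H - aa G' H)", simplified])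
      using aa red_scale by blast
    have cs: "(\<Sum>G'\<in>supp c'. c' G' * single G' H) = c' H" for H
    proof -
      have "(\<Sum>G'\<in>supp c'. c' G' * single G' H) = (\<Sum>G'\<in>supp c'. if H = G' then c' G' else 0)"
        by (rule sum.cong) (auto simp: single_def)
      also have "\<dots> = (if H \<in> supp c' then c' H else 0)" using fc by (simp add: sum.delta)
      also have "\<dots> = c' H" by (simp add: supp_def)
      finally show ?thesis .
    qed
    have "(\<lambda>H. single G H - a H) = X"
    proof
      fix H
      have "X H = (1 / b G) * (b H - c' H + (\<Sum>G'\<in>supp c'. c' G' * single G' H)
                 - (\<Sum>G'\<in>supp c'. c' G' * aa G' H))"
        unfolding X_def by (simp add: right_diff_distrib sum_subtractf diff_divide_distrib add_divide_distrib)
      also have "\<dots> = (1 / b G) * (b H - (\<Sum>G'\<in>supp c'. c' G' * aa G' H))" using cs by simp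
      also have "\<dots> = single G H - a H" unfolding a_def using bG by (simp add: field_simps)
      finally show "single G H - a H = X H" by simp
    qed
    then have red: "reducible n nc (\<lambda>H. single G H - a H)" using rX by simp
    have z: "a H = 0" if "H \<notin> M" for H
    proof -
      have "aa G' H = 0" if "G' \<in> supp c'" for G'
      proof -
        have "supp (aa G') \<subseteq> M" using aa that by blast
        then show ?thesis using \<open>H \<notin> M\<close> unfolding supp_def by blast
      qed
      then have s0: "(\<Sum>G'\<in>supp c'. c' G' * aa G' H) = 0" by simp
      show ?thesis
      proof (cases "H = G")
        case True then show ?thesis using s0 unfolding a_def by (simp add: single_def)
      next
        case False
        then have "b H = 0" using b(2) \<open>H \<notin> M\<close> by (auto simp: supp_def)
        then show ?thesis using s0 False unfolding a_def by (simp add: single_def)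
      qed
    qed
    have sM: "supp a \<subseteq> M" using z by (auto simp: supp_def)
    have sf: "supp a \<subseteq> insert G (supp b \<union> (\<Union>G'\<in>supp c'. supp (aa G')))"
    proof
      fix H assume h: "H \<in> supp a"
      show "H \<in> insert G (supp b \<union> (\<Union>G'\<in>supp c'. supp (aa G')))"
      proof (rule ccontr)
        assume nn: "H \<notin> insert G (supp b \<union> (\<Union>G'\<in>supp c'. supp (aa G')))"
        then have "\<forall>G'\<in>supp c'. aa G' H = 0" unfolding supp_def by blast
        then have "(\<Sum>G'\<in>supp c'. c' G' * aa G' H) = 0" by simp
        then have "a H = 0" using nn unfolding a_def by (auto simp: supp_def single_def)
        then show False using h by (simp add: supp_def)
      qed
    qed
    have "finite (supp a)" using sf b(1) fc aa by (meson finite_UN finite_Un finite_insert finite_subset)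
    then show ?thesis using sM red by blast
  qed
qed

theorem mainTheorem4:
  fixes n :: nat and nc :: "nat \<Rightarrow> nat" and M :: "hgraph set"
  assumes "n \<ge> 2"
    and "maximal_set (DIRI n nc) M"
  shows "maximal_set (IRI n nc) M"
proof -
  have DM: "DIRI n nc M" using assms(2) unfolding maximal_set_def by auto
  have rd: "reducible n nc c \<Longrightarrow> deg_reducible n nc c" for c
    unfolding deg_reducible_def red_equiv_def by (auto simp: reducible_def)
  have IM: "IRI n nc M"
    using DM rd unfolding DIRI_def IRI_def irreducible_def deg_irreducible_def
      red_indep_def deg_red_indep_def by blast
  have "S = M" if S: "IRI n nc S" "M \<subseteq> S" for S
  proof (rule ccontr)
    assume "S \<noteq> M"
    then obtain G where G: "G \<in> S" "G \<notin> M" using S by blast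
    have "valid_hg n nc G" using S G unfolding IRI_def by auto
    then obtain a where a: "finite (supp a)" "supp a \<subseteq> M" "reducible n nc (\<lambda>H. single G H - a H)"
      using span[OF assms(2)] by blast
    let ?d = "\<lambda>H. single G H - a H"
    have s: "supp ?d \<subseteq> insert G (supp a)" by (auto simp: supp_def single_def)
    have "supp ?d \<subseteq> S" using s a(2) S(2) G(1) by blast
    moreover have "finite (supp ?d)" using s a(1) finite_subset by blast
    ultimately have "?d = (\<lambda>H. 0)" using S(1) a(3) unfolding IRI_def red_indep_def by blast
    then have "single G G - a G = 0" by metis
    moreover have "a G = 0" using a(2) G(2) by (auto simp: supp_def)
    ultimately show False by (simp add: single_def)
  qed
  then show ?thesis using IM unfolding maximal_set_def by blast
qed

end
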